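(* Let $Y$ be a metric space and $X$ a non-empty subset. If for every pair of points $x,y\in Y$ there exists a point $z\in C(x,y)\cap X$ (cone taken in $Y$), then the restriction map $f\mapsto f|_X$ is an isometry from $\mathrm{E}(Y)$ onto $\mathrm{E}(X)$.
   Context: $I(x,y)=\{v\in Y: d(x,v)+d(v,y)=d(x,y)\}$ and $C(x,v)=\{y\in Y: v\in I(x,y)\}$. For a metric space $Z$, $\Delta(Z)=\{f\colon Z\to\mathbb R: f(x)+f(y)\ge d(x,y)\ \forall x,y\}$ with the pointwise order; $\mathrm E(Z)$ is its set of minimal elements, with metric $\|f-g\|_\infty=\sup|f-g|$. *)

theory Defs
  imports "HOL-Analysis.Analysis"
begin

text \<open>Real-valued functions on a subset Z are modelled
  as functions on the whole type that vanish outside Z (extensional convention).\<close>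

definition metric_interval :: "'a::metric_space set \<Rightarrow> 'a \<Rightarrow> 'a \<Rightarrow> 'a set" where
  "metric_interval Y x y = {v \<in> Y. dist x v + dist v y = dist x y}"

definition metric_cone :: "'a::metric_space set \<Rightarrow> 'a \<Rightarrow> 'a \<Rightarrow> 'a set" where
  "metric_cone Y x v = {y \<in> Y. v \<in> metric_interval Y x y}"

definition Delta :: "'a::metric_space set \<Rightarrow> ('a \<Rightarrow> real) set" where
  "Delta Z = {f. (\<forall>x\<in>Z. \<forall>y\<in>Z. dist x y \<le> f x + f y) \<and> (\<forall>x. x \<notin> Z \<longrightarrow> f x = 0)}"

definition Ext :: "'a::metric_space set \<Rightarrow> ('a \<Rightarrow> real) set" where
  "Ext Z = {f \<in> Delta Z. \<forall>g \<in> Delta Z. (\<forall>x\<in>Z. g x \<le> f x) \<longrightarrow> g = f}"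

definition sup_dist :: "'a set \<Rightarrow> ('a \<Rightarrow> real) \<Rightarrow> ('a \<Rightarrow> real) \<Rightarrow> ereal" where
  "sup_dist Z f g = (SUP x\<in>Z. ereal \<bar>f x - g x\<bar>)"

definition restr :: "'a set \<Rightarrow> ('a \<Rightarrow> real) \<Rightarrow> ('a \<Rightarrow> real)" where
  "restr X f = (\<lambda>x. if x \<in> X then f x else 0)"

end

theory Submission
  imports Defs
begin

lemma Delta_nonneg: "f \<in> Delta Z \<Longrightarrow> x \<in> Z \<Longrightarrow> 0 \<le> f x"
proof -
  assume "f \<in> Delta Z" "x \<in> Z"
  hence "dist x x \<le> f x + f x" unfolding Delta_def by blast
  thus "0 \<le> f x" by simp
qed

lemma Ext_tight:
  assumes "f \<in> Ext Z" "x \<in> Z" "e > 0"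
  shows "\<exists>y\<in>Z. f x + f y \<le> dist x y + e"
proof (rule ccontr)
  assume "\<not> ?thesis"
  hence H: "\<forall>y\<in>Z. dist x y + e < f x + f y" by auto
  have fD: "f \<in> Delta Z" and min: "\<forall>g\<in>Delta Z. (\<forall>x\<in>Z. g x \<le> f x) \<longrightarrow> g = f"
    using assms(1) unfolding Ext_def by auto
  have fD1: "\<forall>u\<in>Z. \<forall>v\<in>Z. dist u v \<le> f u + f v" and fD2: "\<forall>u. u \<notin> Z \<longrightarrow> f u = 0"
    using fD unfolding Delta_def by auto
  define g where "g = f(x := max (f x - e) 0)"
  have "g \<in> Delta Z" unfolding Delta_def
  proof (intro CollectI conjI ballI allI impI)
    fix u v assume u: "u\<in>Z" "v\<in>Z"
    show "dist u v \<le> g u + g v"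
    proof (cases "u = x")
      case True
      show ?thesis
      proof (cases "v = x")
        case True thus ?thesis using \<open>u = x\<close> by (simp add: g_def)
      next
        case False thus ?thesis using True H u by (auto simp: g_def dist_commute)
      qed
    next
      case False
      show ?thesis
      proof (cases "v = x")
        case True thus ?thesis using False H u by (auto simp: g_def dist_commute)
      next
        case False2: False thus ?thesis using False fD1 u by (auto simp: g_def)
      qed
    qed
  next
    fix u assume "u \<notin> Z" thus "g u = 0" using fD2 assms(2) by (auto simp: g_def)
  qed
  moreover have "\<forall>u\<in>Z. g u \<le> f u" using Delta_nonneg[OF fD assms(2)] assms(3) by (auto simp: g_def)
  ultimately have "g = f" using min by auto
  moreover have "g x < f x" using H assms(2,3) by (auto simp: g_def)
  ultimately show False by simp
qed

lemma tight_Ext: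
  assumes "f \<in> Delta Z" "\<forall>x\<in>Z. \<forall>e>0. \<exists>y\<in>Z. f x + f y \<le> dist x y + e"
  shows "f \<in> Ext Z"
  unfolding Ext_def
proof (intro CollectI conjI ballI impI assms(1))
  fix g assume gD: "g \<in> Delta Z" and le: "\<forall>x\<in>Z. g x \<le> f x"
  show "g = f"
  proof
    fix u show "g u = f u"
    proof (cases "u \<in> Z")
      case True
      have "f u \<le> g u"
      proof (rule field_le_epsilon)
        fix e :: real assume "e > 0"
        then obtain y where y: "y \<in> Z" "f u + f y \<le> dist u y + e" using assms(2) True by blast
        have "dist u y \<le> g u + g y" using gD True y unfolding Delta_def by auto
        thus "f u \<le> g u + e" using y le by force
      qed
      thus ?thesis using le True by force
    next
      case False thus ?thesis using gD assms(1) unfolding Delta_def by auto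
    qed
  qed
qed

lemma Ext_lip:
  assumes "f \<in> Ext Z" "y \<in> Z" "z \<in> Z"
  shows "f z \<le> f y + dist y z"
proof (rule field_le_epsilon)
  fix e :: real assume "e > 0"
  then obtain w where w: "w \<in> Z" "f z + f w \<le> dist z w + e" using Ext_tight assms by blast
  have "dist y w \<le> f y + f w" using assms(1,2) w(1) unfolding Ext_def Delta_def by auto
  moreover have "dist z w \<le> dist z y + dist y w" by (rule dist_triangle)
  ultimately show "f z \<le> f y + dist y z + e" using w by (simp add: dist_commute)
qed

lemma Xtight:
  assumes XY: "X \<subseteq> Y" and cone: "\<forall>x\<in>Y. \<forall>y\<in>Y. \<exists>z\<in>X. dist x y + dist y z = dist x z"
    and f: "f \<in> Ext Y" and y: "y \<in> Y" and e: "e > 0"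
  shows "\<exists>z\<in>X. f y + f z \<le> dist y z + e"
proof -
  obtain w where w: "w \<in> Y" "f y + f w \<le> dist y w + e" using Ext_tight f y e by blast
  obtain z where z: "z \<in> X" "dist y w + dist w z = dist y z" using cone y w by blast
  have "f z \<le> f w + dist w z" using Ext_lip[OF f w(1)] z XY by blast
  hence "f y + f z \<le> dist y z + e" using z w by linarith
  thus ?thesis using z(1) by blast
qed

theorem proposition5p4:
  fixes Y X :: "'a::metric_space set"
  assumes "X \<subseteq> Y" and "X \<noteq> {}"
    and "\<forall>x\<in>Y. \<forall>y\<in>Y. \<exists>z. z \<in> metric_cone Y x y \<inter> X"
  shows "bij_betw (restr X) (Ext Y) (Ext X)
    \<and> (\<forall>f\<in>Ext Y. \<forall>g\<in>Ext Y. sup_dist X (restr X f) (restr X g) = sup_dist Y f g)"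
proof -
  have XY: "X \<subseteq> Y" by fact
  have cone: "\<forall>x\<in>Y. \<forall>y\<in>Y. \<exists>z\<in>X. dist x y + dist y z = dist x z"
    using assms(3) unfolding metric_cone_def metric_interval_def by blast
  have DY: "\<And>f u v. f \<in> Ext Y \<Longrightarrow> u \<in> Y \<Longrightarrow> v \<in> Y \<Longrightarrow> dist u v \<le> f u + f v"
    unfolding Ext_def Delta_def by auto
  have ZY: "\<And>f u. f \<in> Ext Y \<Longrightarrow> u \<notin> Y \<Longrightarrow> f u = 0"
    unfolding Ext_def Delta_def by auto
  have maps: "restr X f \<in> Ext X" if f: "f \<in> Ext Y" for f
  proof (rule tight_Ext)
    show "restr X f \<in> Delta X" unfolding Delta_def restr_def using DY[OF f] XY by auto
    show "\<forall>x\<in>X. \<forall>e>0. \<exists>y\<in>X. restr X f x + restr X f y \<le> dist x y + e"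
    proof (intro ballI allI impI)
      fix x e assume x: "x \<in> X" and e: "(e::real) > 0"
      obtain z where "z \<in> X" "f x + f z \<le> dist x z + e"
        using Xtight[OF XY cone f _ e, of x] x XY by blast
      thus "\<exists>y\<in>X. restr X f x + restr X f y \<le> dist x y + e" using x by (auto simp: restr_def)
    qed
  qed
  have inj: "inj_on (restr X) (Ext Y)"
  proof (rule inj_onI)
    fix f g assume f: "f \<in> Ext Y" and g: "g \<in> Ext Y" and eq: "restr X f = restr X g"
    have eqX: "f z = g z" if "z \<in> X" for z using fun_cong[OF eq, of z] that by (simp add: restr_def)
    have le: "f y \<le> g y" if f: "f \<in> Ext Y" and g: "g \<in> Ext Y" and y: "y \<in> Y"
      and eqX: "\<And>z. z \<in> X \<Longrightarrow> f z = g z" for f g y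
    proof (rule field_le_epsilon)
      fix e :: real assume "e > 0"
      then obtain z where z: "z \<in> X" "f y + f z \<le> dist y z + e" using Xtight[OF XY cone f y] by blast
      have "dist y z \<le> g y + g z" using DY[OF g y] z XY by blast
      thus "f y \<le> g y + e" using z eqX by force
    qed
    show "f = g"
    proof
      fix u show "f u = g u"
      proof (cases "u \<in> Y")
        case True
        show ?thesis using le[OF f g True eqX] le[OF g f True] eqX by force
      next
        case False thus ?thesis using ZY[OF f False] ZY[OF g False] by simp
      qed
    qed
  qed
  have surj: "Ext X \<subseteq> restr X ` Ext Y"
  proof
    fix h assume h: "h \<in> Ext X"
    have hD: "\<And>u v. u \<in> X \<Longrightarrow> v \<in> X \<Longrightarrow> dist u v \<le> h u + h v"
      and hZ: "\<And>u. u \<notin> X \<Longrightarrow> h u = 0" using h unfolding Ext_def Delta_def by auto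
    obtain x0 where x0: "x0 \<in> X" using assms(2) by blast
    have bdd: "bdd_above ((\<lambda>z. dist y z - h z) ` X)" for y
    proof (rule bdd_aboveI2)
      fix z assume z: "z \<in> X"
      have "dist y z \<le> dist y x0 + dist x0 z" by (rule dist_triangle)
      thus "dist y z - h z \<le> dist y x0 + h x0" using hD[OF x0 z] by linarith
    qed
    define f where "f = (\<lambda>y. if y \<in> Y then (SUP z\<in>X. dist y z - h z) else 0)"
    have upper: "dist y z - h z \<le> f y" if "y \<in> Y" "z \<in> X" for y z
      using cSUP_upper[OF that(2) bdd[of y]] that by (simp add: f_def)
    have approx: "\<exists>z\<in>X. f y - e < dist y z - h z" if "y \<in> Y" "e > 0" for y e
    proof -
      have "f y - e < (SUP z\<in>X. dist y z - h z)" using that by (simp add: f_def)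
      thus ?thesis using less_cSUP_iff[OF assms(2) bdd[of y]] by blast
    qed
    have fX: "f x = h x" if x: "x \<in> X" for x
    proof (rule antisym)
      have "(SUP z\<in>X. dist x z - h z) \<le> h x"
        by (rule cSUP_least[OF assms(2)]) (use hD x in force)
      thus "f x \<le> h x" using x XY by (auto simp: f_def)
      show "h x \<le> f x"
      proof (rule field_le_epsilon)
        fix e :: real assume "e > 0"
        then obtain w where "w \<in> X" "h x + h w \<le> dist x w + e" using Ext_tight[OF h x] by blast
        thus "h x \<le> f x + e" using upper[of x w] x XY by force
      qed
    qed
    have fD: "f \<in> Delta Y" unfolding Delta_def
    proof (intro CollectI conjI ballI allI impI)
      fix y y' assume y: "y \<in> Y" and y': "y' \<in> Y"
      obtain z where z: "z \<in> X" "dist y y' + dist y' z = dist y z" using cone y y' by blast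
      show "dist y y' \<le> f y + f y'"
      proof (rule field_le_epsilon)
        fix e :: real assume "e > 0"
        then obtain w where w: "w \<in> X" "h z + h w \<le> dist z w + e" using Ext_tight[OF h z(1)] by blast
        have "dist z w \<le> dist z y' + dist y' w" by (rule dist_triangle)
        moreover have "dist y' w - h w \<le> f y'" using upper y' w by blast
        moreover have "dist y z - h z \<le> f y" using upper y z by blast
        ultimately show "dist y y' \<le> f y + f y' + e" using z w by (simp add: dist_commute)
      qed
    next
      fix u assume "u \<notin> Y" thus "f u = 0" by (simp add: f_def)
    qed
    have fE: "f \<in> Ext Y"
    proof (rule tight_Ext[OF fD], intro ballI allI impI)
      fix y e assume y: "y \<in> Y" and e: "(e::real) > 0"
      obtain z where z: "z \<in> X" "f y - e < dist y z - h z" using approx[OF y e] by blast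
      thus "\<exists>z\<in>Y. f y + f z \<le> dist y z + e" using fX[OF z(1)] XY by force
    qed
    have "restr X f = h"
    proof
      fix u show "restr X f u = h u" using fX hZ by (simp add: restr_def)
    qed
    thus "h \<in> restr X ` Ext Y" using fE by blast
  qed
  have bij: "bij_betw (restr X) (Ext Y) (Ext X)"
    unfolding bij_betw_def using inj surj maps by blast
  have iso: "sup_dist X (restr X f) (restr X g) = sup_dist Y f g" if f: "f \<in> Ext Y" and g: "g \<in> Ext Y" for f g
  proof -
    have eq1: "sup_dist X (restr X f) (restr X g) = (SUP x\<in>X. ereal \<bar>f x - g x\<bar>)"
      unfolding sup_dist_def restr_def by (rule SUP_cong) auto
    let ?S = "(SUP x\<in>X. ereal \<bar>f x - g x\<bar>)"
    have "?S \<le> sup_dist Y f g" unfolding sup_dist_def by (rule SUP_subset_mono[OF XY]) auto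
    moreover have "sup_dist Y f g \<le> ?S" unfolding sup_dist_def
    proof (rule SUP_least)
      fix y assume y: "y \<in> Y"
      show "ereal \<bar>f y - g y\<bar> \<le> ?S"
      proof (rule ereal_le_epsilon2)
        fix e :: real assume e: "e > 0"
        have half: "ereal (g' y - f' y) \<le> ?S + ereal e" if f': "f' \<in> Ext Y" and g': "g' \<in> Ext Y"
          and sym: "\<And>x. \<bar>f' x - g' x\<bar> = \<bar>f x - g x\<bar>" for f' g'
        proof -
          obtain z where z: "z \<in> X" "g' y + g' z \<le> dist y z + e" using Xtight[OF XY cone g' y e] by blast
          have "dist y z \<le> f' y + f' z" using DY[OF f' y] z XY by blast
          hence "g' y - f' y \<le> \<bar>f x - g x\<bar> + e" if "x = z" for x using z sym[of z] that by force
          hence "ereal (g' y - f' y) \<le> ereal \<bar>f z - g z\<bar> + ereal e" by simp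
          also have "\<dots> \<le> ?S + ereal e" using z by (intro add_right_mono SUP_upper) auto
          finally show ?thesis .
        qed
        have a: "ereal (g y - f y) \<le> ?S + ereal e" by (rule half[OF f g]) simp
        have b: "ereal (f y - g y) \<le> ?S + ereal e" by (rule half[OF g f]) (simp add: abs_minus_commute)
        show "ereal \<bar>f y - g y\<bar> \<le> ?S + ereal e"
          by (cases "f y \<le> g y") (use a b in auto)
      qed
    qed
    ultimately show ?thesis using eq1 by simp
  qed
  show ?thesis using bij iso by blast
qed

end
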